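(* Let $G$ be a finite non-abelian group and $C\le G$ a subgroup such that: $C=\langle c\rangle$ is cyclic of order a power of a prime $r$; $C$ is characteristic in $G$; $C\cap Z(G)=\{1\}$; and some $a\in G$ induces by conjugation on $C$ an automorphism whose order is not a power of $r$. Let $\gamma$ be a gamma function on $G$ and suppose there is a function $\sigma:C\to C$ with $\gamma(x)=\iota\big((x^{\sigma})^{-1}\big)$ for every $x\in C$. Then either $\gamma(x)=1$ for all $x\in C$ (i.e. $C\le\ker(\gamma)$), or $\gamma(x)=\iota(x^{-1})$ for all $x\in C$, in which case $C\le\ker(\tilde\gamma)$, where $\tilde\gamma(x)=\gamma(x^{-1})\iota(x^{-1})$.
   Context: Maps act on the right, written exponentially; $\iota(g)\in\mathrm{Aut}(G)$ is $x\mapsto g^{-1}xg$. A gamma function on $G$ is a map $\gamma:G\to\mathrm{Aut}(G)$ with $\gamma(g^{\gamma(h)}h)=\gamma(g)\gamma(h)$ for all $g,h\in G$; $\ker(\gamma)=\{g:\gamma(g)=1\}$. The map $\tilde\gamma$ is again a gamma function. *)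

theory Defs
  imports "HOL-Algebra.Algebra"
begin

text \<open>Maps act on the right. The right-action product
  phi psi (first phi, then psi) is compose (carrier G) psi phi.\<close>

definition conj_aut :: "('a, 'b) monoid_scheme \<Rightarrow> 'a \<Rightarrow> ('a \<Rightarrow> 'a)" where
  "conj_aut G g = (\<lambda>x \<in> carrier G. inv\<^bsub>G\<^esub> g \<otimes>\<^bsub>G\<^esub> x \<otimes>\<^bsub>G\<^esub> g)"

definition id_aut :: "('a, 'b) monoid_scheme \<Rightarrow> ('a \<Rightarrow> 'a)" where
  "id_aut G = (\<lambda>x \<in> carrier G. x)"

definition aut_mult :: "('a, 'b) monoid_scheme \<Rightarrow> ('a \<Rightarrow> 'a) \<Rightarrow> ('a \<Rightarrow> 'a) \<Rightarrow> ('a \<Rightarrow> 'a)" where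
  "aut_mult G phi psi = compose (carrier G) psi phi"

definition gamma_function :: "('a, 'b) monoid_scheme \<Rightarrow> ('a \<Rightarrow> ('a \<Rightarrow> 'a)) \<Rightarrow> bool" where
  "gamma_function G \<gamma> \<longleftrightarrow>
     (\<forall>g \<in> carrier G. \<gamma> g \<in> auto G) \<and>
     (\<forall>g \<in> carrier G. \<forall>h \<in> carrier G.
        \<gamma> (\<gamma> h g \<otimes>\<^bsub>G\<^esub> h) = aut_mult G (\<gamma> g) (\<gamma> h))"

definition gamma_tilde :: "('a, 'b) monoid_scheme \<Rightarrow> ('a \<Rightarrow> ('a \<Rightarrow> 'a)) \<Rightarrow> 'a \<Rightarrow> ('a \<Rightarrow> 'a)" where
  "gamma_tilde G \<gamma> x = aut_mult G (\<gamma> (inv\<^bsub>G\<^esub> x)) (conj_aut G (inv\<^bsub>G\<^esub> x))"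

definition group_center :: "('a, 'b) monoid_scheme \<Rightarrow> 'a set" where
  "group_center G = {z \<in> carrier G. \<forall>x \<in> carrier G. z \<otimes>\<^bsub>G\<^esub> x = x \<otimes>\<^bsub>G\<^esub> z}"

definition characteristic :: "('a, 'b) monoid_scheme \<Rightarrow> 'a set \<Rightarrow> bool" where
  "characteristic G H \<longleftrightarrow> subgroup H G \<and> (\<forall>\<phi> \<in> auto G. \<phi> ` H = H)"

end

theory Submission
  imports Defs "HOL-Computational_Algebra.Primes"
begin


lemma nt_lift:
  fixes t :: int and r :: nat
  assumes "int r dvd t - 1"
  shows "int r ^ Suc i dvd t ^ (r ^ i) - 1"
proof (induction i)
  case 0 then show ?case using assms by simp
next
  case (Suc i)
  define x where "x = t ^ (r ^ i)"
  have IH: "int r ^ Suc i dvd x - 1" using Suc x_def by simp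
  have rx: "int r dvd x - 1" using IH by (meson dvd_power dvd_trans zero_less_Suc dvd_refl dvd_mult_left power_Suc)
  have each: "int r dvd x ^ l - 1" for l
    using rx power_diff_1_eq[of x l] by (metis dvd_mult2)
  have "int r dvd (\<Sum>l<r. x ^ l - 1)" by (rule dvd_sum) (use each in auto)
  also have "(\<Sum>l<r. x ^ l - 1) = (\<Sum>l<r. x ^ l) - int r"
    by (simp add: sum_subtractf)
  finally have d1: "int r dvd (\<Sum>l<r. x ^ l) - int r" .
  have "int r dvd ((\<Sum>l<r. x ^ l) - int r) + int r" using d1 dvd_refl by (rule dvd_add)
  then have "int r dvd (\<Sum>l<r. x ^ l)" by simp
  with IH have "int r ^ Suc i * int r dvd (x - 1) * (\<Sum>l<r. x ^ l)"
    by (rule mult_dvd_mono)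
  moreover have "(x - 1) * (\<Sum>l<r. x ^ l) = t ^ (r ^ Suc i) - 1"
  proof -
    have "t ^ (r ^ Suc i) = x ^ r" unfolding x_def by (simp only: power_Suc2 power_mult)
    then show ?thesis using power_diff_1_eq[of x r] by simp
  qed
  ultimately show ?case by (simp add: mult.commute)
qed

lemma primepow_dvd_consec:
  fixes m :: int and r k :: nat
  assumes "Factorial_Ring.prime r" "int r ^ k dvd m * (m - 1)"
  shows "int r ^ k dvd m \<or> int r ^ k dvd m - 1"
proof -
  have pr: "Factorial_Ring.prime (int r)" using assms(1) by simp
  show ?thesis
  proof (cases "int r dvd m")
    case True
    have "\<not> int r dvd m - 1"
    proof
      assume "int r dvd m - 1"
      with True have "int r dvd m - (m - 1)" by (rule dvd_diff)
      then have "int r dvd 1" by simp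
      then show False using pr using not_prime_unit by blast
    qed
    then have "coprime (int r ^ k) (m - 1)"
      using pr by (simp add: prime_imp_coprime)
    then show ?thesis using assms(2) by (simp add: coprime_dvd_mult_left_iff)
  next
    case False
    then have "coprime (int r ^ k) m" using pr by (simp add: prime_imp_coprime)
    then show ?thesis using assms(2) by (simp add: coprime_dvd_mult_right_iff)
  qed
qed



context group begin

lemma conj_aut_apply: "x \<in> carrier G \<Longrightarrow> conj_aut G g x = inv g \<otimes> x \<otimes> g"
  by (simp add: conj_aut_def)

lemma conj_aut_hom: "g \<in> carrier G \<Longrightarrow> conj_aut G g \<in> hom G G"
  by (rule homI) (auto simp: conj_aut_def m_assoc, simp add: m_assoc[symmetric])

lemma conj_aut_compose:
  assumes "a \<in> carrier G" "b \<in> carrier G"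
  shows "compose (carrier G) (conj_aut G b) (conj_aut G a) = conj_aut G (a \<otimes> b)"
  using assms by (auto simp: conj_aut_def compose_def inv_mult_group m_assoc fun_eq_iff)

lemma conj_aut_one: "conj_aut G \<one> = id_aut G"
  by (auto simp: conj_aut_def id_aut_def)

lemma conj_aut_auto:
  assumes g: "g \<in> carrier G"
  shows "conj_aut G g \<in> auto G"
proof -
  have "bij_betw (conj_aut G g) (carrier G) (carrier G)"
  proof (rule bij_betw_byWitness[where f' = "conj_aut G (inv g)"])
    show "\<forall>x\<in>carrier G. conj_aut G (inv g) (conj_aut G g x) = x"
      using g by (auto simp: conj_aut_def m_assoc, simp add: m_assoc[symmetric])
    show "\<forall>x\<in>carrier G. conj_aut G g (conj_aut G (inv g) x) = x"
      using g by (auto simp: conj_aut_def m_assoc, simp add: m_assoc[symmetric])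
  qed (use g in \<open>auto simp: conj_aut_def\<close>)
  then show ?thesis using conj_aut_hom[OF g]
    by (simp add: auto_def Bij_def conj_aut_def)
qed

lemma lc1 [simp]: "x \<in> carrier G \<Longrightarrow> y \<in> carrier G \<Longrightarrow> x \<otimes> (inv x \<otimes> y) = y"
  by (simp add: m_assoc[symmetric])

lemma lc2 [simp]: "x \<in> carrier G \<Longrightarrow> y \<in> carrier G \<Longrightarrow> inv x \<otimes> (x \<otimes> y) = y"
  by (simp add: m_assoc[symmetric])

lemma auto_group_hom: "\<phi> \<in> auto G \<Longrightarrow> group_hom G G \<phi>"
  by (simp add: auto_def group_hom_def group_hom_axioms_def is_group)

lemma auto_bij: "\<phi> \<in> auto G \<Longrightarrow> bij_betw \<phi> (carrier G) (carrier G)"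
  by (simp add: auto_def Bij_def)

end


theorem mainTheorem11:
  fixes G (structure) and C :: "'a set" and c a :: 'a and r :: nat
    and \<gamma> :: "'a \<Rightarrow> ('a \<Rightarrow> 'a)" and \<sigma> :: "'a \<Rightarrow> 'a"
  assumes "group G" and "finite (carrier G)"
    and "\<exists>x \<in> carrier G. \<exists>y \<in> carrier G. x \<otimes> y \<noteq> y \<otimes> x"
    and "c \<in> carrier G" and "C = generate G {c}"
    and "Factorial_Ring.prime r" and "\<exists>k. card C = r ^ k"
    and "characteristic G C"
    and "C \<inter> group_center G = {\<one>}"
    and "a \<in> carrier G"
    and "\<not> (\<exists>k. group.ord (BijGroup C) (restrict (conj_aut G a) C) = r ^ k)"
    and "gamma_function G \<gamma>"
    and "\<forall>x \<in> C. \<sigma> x \<in> C"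
    and "\<forall>x \<in> C. \<gamma> x = conj_aut G (inv (\<sigma> x))"
  shows "(\<forall>x \<in> C. \<gamma> x = id_aut G) \<or>
         ((\<forall>x \<in> C. \<gamma> x = conj_aut G (inv x)) \<and>
          (\<forall>x \<in> C. gamma_tilde G \<gamma> x = id_aut G))"
proof -
  interpret group G by fact
  note gf = assms(12)[unfolded gamma_function_def]
  have gauto: "\<And>g. g \<in> carrier G \<Longrightarrow> \<gamma> g \<in> auto G" using gf by blast
  have geq: "\<And>g h. g \<in> carrier G \<Longrightarrow> h \<in> carrier G \<Longrightarrow>
      \<gamma> (\<gamma> h g \<otimes> h) = aut_mult G (\<gamma> g) (\<gamma> h)" using gf by blast
  have Csub: "subgroup C G" using assms(8) by (simp add: characteristic_def)
  have charC: "\<And>\<phi>. \<phi> \<in> auto G \<Longrightarrow> \<phi> ` C = C" using assms(8) by (simp add: characteristic_def)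
  have CG: "C \<subseteq> carrier G" using Csub subgroup.subset by blast
  have Cpow: "C = {c [^] k | k. k \<in> (UNIV::nat set)}"
    using generate_pow_on_finite_carrier[OF assms(2) assms(4)] assms(5) by simp
  have cC: "c \<in> C" using Cpow nat_pow_eone[OF assms(4)] by (metis (mono_tags, lifting) UNIV_I mem_Collect_eq)
  have cpC: "\<And>n::nat. c [^] n \<in> C" using Cpow by blast
  obtain k where Nk: "ord c = r ^ k" using assms(7) generate_pow_card[OF assms(4)] assms(5) by auto
  have Ccomm: "\<And>x y. x \<in> C \<Longrightarrow> y \<in> C \<Longrightarrow> x \<otimes> y = y \<otimes> x"
    using Cpow assms(4) by (auto simp: nat_pow_mult add.commute)
  have sC: "\<And>x. x \<in> C \<Longrightarrow> \<sigma> x \<in> C" using assms(13) by blast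
  have gC: "\<And>x. x \<in> C \<Longrightarrow> \<gamma> x = conj_aut G (inv (\<sigma> x))" using assms(14) by blast
  have invC: "\<And>x. x \<in> C \<Longrightarrow> inv x \<in> C" by (rule subgroup.m_inv_closed[OF Csub])
  have mC: "\<And>x y. x \<in> C \<Longrightarrow> y \<in> C \<Longrightarrow> x \<otimes> y \<in> C" by (rule subgroup.m_closed[OF Csub])
  have conjC: "\<And>g z. g \<in> carrier G \<Longrightarrow> z \<in> C \<Longrightarrow> inv g \<otimes> z \<otimes> g \<in> C"
  proof -
    fix g z assume g: "g \<in> carrier G" and z: "z \<in> C"
    have "conj_aut G g z \<in> conj_aut G g ` C" using z by blast
    then have "conj_aut G g z \<in> C" using charC[OF conj_aut_auto[OF g]] by simp
    then show "inv g \<otimes> z \<otimes> g \<in> C" using z CG by (auto simp: conj_aut_def)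
  qed
  have inj: "\<And>p q. p \<in> C \<Longrightarrow> q \<in> C \<Longrightarrow> conj_aut G p = conj_aut G q \<Longrightarrow> p = q"
  proof -
    fix p q assume p: "p \<in> C" and q: "q \<in> C" and e: "conj_aut G p = conj_aut G q"
    have pG: "p \<in> carrier G" "q \<in> carrier G" using p q CG by auto
    have "q \<otimes> inv p \<in> group_center G"
      unfolding group_center_def
    proof (safe)
      show "q \<otimes> inv p \<in> carrier G" using pG by simp
      fix z assume z: "z \<in> carrier G"
      have "inv p \<otimes> z \<otimes> p = inv q \<otimes> z \<otimes> q" using fun_cong[OF e, of z] z by (simp add: conj_aut_def)
      then have "q \<otimes> (inv p \<otimes> z \<otimes> p) \<otimes> inv p = q \<otimes> (inv q \<otimes> z \<otimes> q) \<otimes> inv p" by simp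
      then show "q \<otimes> inv p \<otimes> z = z \<otimes> (q \<otimes> inv p)" using pG z by (simp add: m_assoc)
    qed
    moreover have "q \<otimes> inv p \<in> C" using p q invC mC by blast
    ultimately have "q \<otimes> inv p = \<one>" using assms(9) by blast
    then show "p = q" using pG by (metis inv_equality inv_inv inv_closed)
  qed
  have shom: "\<And>x y. x \<in> C \<Longrightarrow> y \<in> C \<Longrightarrow> \<sigma> (x \<otimes> y) = \<sigma> x \<otimes> \<sigma> y"
  proof -
    fix x y assume x: "x \<in> C" and y: "y \<in> C"
    have xG: "x \<in> carrier G" "y \<in> carrier G" "\<sigma> x \<in> carrier G" "\<sigma> y \<in> carrier G"
      using x y sC CG by auto
    have "\<gamma> y x = \<sigma> y \<otimes> x \<otimes> inv (\<sigma> y)" using gC[OF y] xG by (simp add: conj_aut_def)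
    also have "\<dots> = x \<otimes> \<sigma> y \<otimes> inv (\<sigma> y)" using Ccomm[OF x sC[OF y]] by simp
    also have "\<dots> = x" using xG by (simp add: m_assoc)
    finally have gyx: "\<gamma> y x = x" .
    have "\<gamma> (x \<otimes> y) = aut_mult G (\<gamma> x) (\<gamma> y)" using geq[of x y] xG gyx by simp
    also have "\<dots> = conj_aut G (inv (\<sigma> x) \<otimes> inv (\<sigma> y))"
      using gC[OF x] gC[OF y] xG by (simp add: aut_mult_def conj_aut_compose)
    finally have "conj_aut G (inv (\<sigma> (x \<otimes> y))) = conj_aut G (inv (\<sigma> x) \<otimes> inv (\<sigma> y))"
      using gC[OF mC[OF x y]] by simp
    moreover have "inv (\<sigma> (x \<otimes> y)) \<in> C" using invC sC mC x y by simp
    moreover have "inv (\<sigma> x) \<otimes> inv (\<sigma> y) \<in> C" using invC sC mC x y by simp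
    ultimately have "inv (\<sigma> (x \<otimes> y)) = inv (\<sigma> x) \<otimes> inv (\<sigma> y)"
      using inj by blast
    also have "\<dots> = inv (\<sigma> y \<otimes> \<sigma> x)" using xG by (simp add: inv_mult_group)
    finally have e: "inv (\<sigma> (x \<otimes> y)) = inv (\<sigma> y \<otimes> \<sigma> x)" .
    have "\<sigma> (x \<otimes> y) \<in> carrier G" using sC mC x y CG by blast
    then have "\<sigma> (x \<otimes> y) = \<sigma> y \<otimes> \<sigma> x"
      using e xG by (metis inv_inv m_closed)
    then show "\<sigma> (x \<otimes> y) = \<sigma> x \<otimes> \<sigma> y" using Ccomm sC x y by simp
  qed
  obtain m :: nat where cm: "\<sigma> c = c [^] m" using sC[OF cC] Cpow by blast
  have s1: "\<sigma> \<one> = \<one>"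
  proof -
    have oC: "\<one> \<in> C" by (rule subgroup.one_closed[OF Csub])
    have "\<sigma> \<one> \<otimes> \<sigma> \<one> = \<sigma> \<one> \<otimes> \<one>" using shom[OF oC oC] sC[OF oC] CG by auto
    then show ?thesis using sC[OF oC] CG by (metis l_cancel one_closed subsetD)
  qed
  have spow_c: "\<And>n::nat. \<sigma> (c [^] n) = c [^] (m * n)"
  proof -
    fix n :: nat show "\<sigma> (c [^] n) = c [^] (m * n)"
    proof (induction n)
      case 0 then show ?case using s1 by simp
    next
      case (Suc n)
      have "\<sigma> (c [^] Suc n) = \<sigma> (c [^] n \<otimes> c)" by simp
      also have "\<dots> = c [^] (m * n) \<otimes> c [^] m" using shom[OF cpC cC] Suc cm by simp
      also have "\<dots> = c [^] (m * Suc n)" using assms(4) by (simp add: nat_pow_mult add.commute)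
      finally show ?case .
    qed
  qed
  have spow: "\<And>x. x \<in> C \<Longrightarrow> \<sigma> x = x [^] m"
  proof -
    fix x assume "x \<in> C"
    then obtain n :: nat where n: "x = c [^] n" using Cpow by blast
    show "\<sigma> x = x [^] m" unfolding n spow_c using nat_pow_pow[OF assms(4), of n m]
      by (simp add: mult.commute)
  qed
  have fix1: "\<And>w. w \<in> C \<Longrightarrow> inv a \<otimes> w \<otimes> a = w \<Longrightarrow> w = \<one>"
  proof (rule ccontr)
    fix w assume w: "w \<in> C" and fw: "inv a \<otimes> w \<otimes> a = w" and wne: "w \<noteq> \<one>"
    have aG: "a \<in> carrier G" by fact
    obtain j :: nat where wj: "w = c [^] j" using w Cpow by blast
    obtain t :: nat where ct: "inv a \<otimes> c \<otimes> a = c [^] t" using conjC[OF aG cC] Cpow by blast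
    have ghom: "group_hom G G (conj_aut G a)" using conj_aut_auto[OF aG] by (rule auto_group_hom)
    have tau_pow: "\<And>n::nat. inv a \<otimes> c [^] n \<otimes> a = c [^] (t * n)"
    proof -
      fix n :: nat
      have "inv a \<otimes> c [^] n \<otimes> a = conj_aut G a (c [^] n)" using assms(4) by (simp add: conj_aut_def)
      also have "\<dots> = (conj_aut G a c) [^] n" using group_hom.hom_nat_pow[OF ghom assms(4)] by simp
      also have "\<dots> = c [^] (t * n)" using ct assms(4) by (simp add: conj_aut_def nat_pow_pow)
      finally show "inv a \<otimes> c [^] n \<otimes> a = c [^] (t * n)" .
    qed
    have "c [^] (t * j) = c [^] j" using tau_pow[of j] fw wj by simp
    then have "c [^] (int (t * j)) = c [^] (int j)" by (simp only: int_pow_int)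
    then have "int (ord c) dvd int j - int (t * j)" using int_pow_eq[OF assms(4)] by blast
    then have dj: "int r ^ k dvd int j * (1 - int t)" using Nk by (simp add: algebra_simps)
    have ndj: "\<not> int r ^ k dvd int j"
    proof
      assume "int r ^ k dvd int j"
      then have "ord c dvd j" using Nk by (metis of_nat_dvd_iff of_nat_power)
      then have "c [^] j = \<one>" using pow_eq_id[OF assms(4)] by blast
      then show False using wne wj by simp
    qed
    have pr: "Factorial_Ring.prime (int r)" using assms(6) by simp
    have rt: "int r dvd int t - 1"
    proof (rule ccontr)
      assume "\<not> int r dvd int t - 1"
      then have "\<not> int r dvd 1 - int t" by (metis dvd_minus_iff minus_diff_eq)
      then have "coprime (int r ^ k) (1 - int t)" using pr by (simp add: prime_imp_coprime)
      then have "int r ^ k dvd int j" using dj by (simp add: coprime_dvd_mult_left_iff)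
      then show False using ndj by simp
    qed
    define T where "T = t ^ (r ^ k)"
    have "int r ^ Suc k dvd int t ^ (r ^ k) - 1" using nt_lift[OF rt] .
    then have "int r ^ k dvd int T - 1" unfolding T_def
      by (metis dvd_mult_left of_nat_power power_Suc2)
    then have "int (ord c) dvd int T - int 1" using Nk by simp
    then have "c [^] (int 1) = c [^] (int T)" using int_pow_eq[OF assms(4)] by blast
    then have "c [^] (1::nat) = c [^] T" by (simp only: int_pow_int)
    then have cT: "c [^] T = c" using assms(4) by simp
    define f where "f = restrict (conj_aut G a) C"
    define B where "B = BijGroup C"
    have grB: "group B" unfolding B_def by (rule group_BijGroup)
    interpret B: group B by (fact grB)
    have fC: "\<And>z. z \<in> C \<Longrightarrow> f z = inv a \<otimes> z \<otimes> a" using CG by (auto simp: f_def conj_aut_def)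
    have fB: "f \<in> carrier B"
    proof -
      have "bij_betw (conj_aut G a) C C"
        using bij_betw_subset[OF auto_bij[OF conj_aut_auto[OF aG]] CG charC[OF conj_aut_auto[OF aG]]] .
      then show ?thesis by (simp add: B_def BijGroup_def Bij_def f_def)
    qed
    have multB: "\<And>g h. g \<in> carrier B \<Longrightarrow> h \<in> carrier B \<Longrightarrow> g \<otimes>\<^bsub>B\<^esub> h = compose C g h"
      by (simp add: B_def BijGroup_def)
    have powf: "\<And>n j. (f [^]\<^bsub>B\<^esub> (n::nat)) (c [^] (j::nat)) = c [^] (j * t ^ n)"
    proof -
      fix n :: nat show "\<And>j. (f [^]\<^bsub>B\<^esub> n) (c [^] (j::nat)) = c [^] (j * t ^ n)"
      proof (induction n)
        case 0 then show ?case using cpC by (simp add: B_def BijGroup_def)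
      next
        case (Suc n j)
        have pc: "f [^]\<^bsub>B\<^esub> n \<in> carrier B" using fB by simp
        have "(f [^]\<^bsub>B\<^esub> Suc n) (c [^] j) = (f [^]\<^bsub>B\<^esub> n \<otimes>\<^bsub>B\<^esub> f) (c [^] j)" by simp
        also have "\<dots> = (f [^]\<^bsub>B\<^esub> n) (f (c [^] j))"
          using multB[OF pc fB] cpC by (simp add: compose_def)
        also have "\<dots> = (f [^]\<^bsub>B\<^esub> n) (c [^] (t * j))" using fC[OF cpC] tau_pow by simp
        also have "\<dots> = c [^] (j * t ^ Suc n)" using Suc.IH[of "t * j"] by (simp add: ac_simps)
        finally show ?case .
      qed
    qed
    have "f [^]\<^bsub>B\<^esub> (r ^ k) = \<one>\<^bsub>B\<^esub>"
    proof
      fix z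
      have e1: "f [^]\<^bsub>B\<^esub> (r ^ k) \<in> extensional C"
        using B.nat_pow_closed[OF fB] by (simp add: B_def BijGroup_def Bij_def)
      show "(f [^]\<^bsub>B\<^esub> (r ^ k)) z = \<one>\<^bsub>B\<^esub> z"
      proof (cases "z \<in> C")
        case True
        then obtain j :: nat where zj: "z = c [^] j" using Cpow by blast
        have "(f [^]\<^bsub>B\<^esub> (r ^ k)) z = c [^] (j * T)" using powf zj T_def by simp
        also have "\<dots> = (c [^] T) [^] j" using assms(4) by (simp add: nat_pow_pow mult.commute)
        also have "\<dots> = z" using cT zj by simp
        finally show ?thesis using True by (simp add: B_def BijGroup_def)
      next
        case False
        then show ?thesis using e1 by (simp add: B_def BijGroup_def extensional_def)
      qed
    qed
    then have "B.ord f dvd r ^ k" using B.pow_eq_id[OF fB] by blast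
    then obtain i where "B.ord f = r ^ i" using divides_primepow_nat[OF assms(6)] by blast
    then show False using assms(11) unfolding B_def f_def by blast
  qed
  have aG: "a \<in> carrier G" by fact
  have aauto: "\<gamma> a \<in> auto G" using gauto[OF aG] .
  have ahom: "group_hom G G (\<gamma> a)" using aauto by (rule auto_group_hom)
  have abij: "bij_betw (\<gamma> a) (carrier G) (carrier G)" using aauto by (rule auto_bij)
  have key: "\<And>x. x \<in> C \<Longrightarrow> (x [^] m) [^] m = x [^] m"
  proof -
    fix x assume x: "x \<in> C"
    define y where "y = x [^] m"
    have xG: "x \<in> carrier G" using x CG by blast
    have yC: "y \<in> C" using spow[OF x] sC[OF x] y_def by simp
    have yG: "y \<in> carrier G" using yC CG by blast
    have sx: "\<sigma> x = y" using spow[OF x] y_def by simp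
    define w where "w = inv y \<otimes> x"
    have wC: "w \<in> C" using invC[OF yC] x mC w_def by simp
    have wG: "w \<in> carrier G" using wC CG by blast
    have awC: "a \<otimes> w \<otimes> inv a \<in> C" using conjC[OF inv_closed[OF aG] wC] aG by simp
    define b where "b = y \<otimes> (a \<otimes> w \<otimes> inv a)"
    have bC: "b \<in> C" using mC[OF yC awC] b_def by simp
    have bG: "b \<in> carrier G" using bC CG by blast
    obtain x2 where x2: "x2 \<in> C" "\<gamma> a x2 = b" using bC charC[OF aauto] by (metis imageE)
    have x2G: "x2 \<in> carrier G" using x2 CG by blast
    have s2C: "\<sigma> x2 \<in> C" using sC[OF x2(1)] .
    have s2G: "\<sigma> x2 \<in> carrier G" using s2C CG by blast
    define p where "p = \<gamma> a (\<sigma> x2)"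
    have pC: "p \<in> C" using s2C charC[OF aauto] p_def by blast
    have pG: "p \<in> carrier G" using pC CG by blast
    have e1: "\<gamma> x a = y \<otimes> a \<otimes> inv y" using gC[OF x] sx aG yG by (simp add: conj_aut_def)
    have e2: "\<gamma> x a \<otimes> x = b \<otimes> a" using e1 aG yG xG by (simp add: b_def w_def m_assoc)
    have "\<gamma> (b \<otimes> a) = aut_mult G (\<gamma> a) (\<gamma> x)" using geq[OF aG xG] e2 by simp
    moreover have "\<gamma> (b \<otimes> a) = aut_mult G (\<gamma> x2) (\<gamma> a)" using geq[OF x2G aG] x2(2) by simp
    ultimately have ce: "compose (carrier G) (\<gamma> x) (\<gamma> a) = compose (carrier G) (\<gamma> a) (\<gamma> x2)"
      by (simp add: aut_mult_def)
    have "conj_aut G (inv y) = conj_aut G (inv p)"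
    proof
      fix z'
      show "conj_aut G (inv y) z' = conj_aut G (inv p) z'"
      proof (cases "z' \<in> carrier G")
        case False then show ?thesis by (simp add: conj_aut_def)
      next
        case True
        then obtain z where z: "z \<in> carrier G" "\<gamma> a z = z'" using abij by (metis bij_betw_imp_surj_on imageE)
        have "compose (carrier G) (\<gamma> x) (\<gamma> a) z = compose (carrier G) (\<gamma> a) (\<gamma> x2) z" using ce by simp
        then have "\<gamma> x z' = \<gamma> a (\<gamma> x2 z)" using z by (simp add: compose_def)
        also have "\<gamma> x2 z = \<sigma> x2 \<otimes> z \<otimes> inv (\<sigma> x2)" using gC[OF x2(1)] z s2G by (simp add: conj_aut_def)
        also have "\<gamma> a (\<sigma> x2 \<otimes> z \<otimes> inv (\<sigma> x2)) = p \<otimes> z' \<otimes> inv p"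
          using z s2G by (simp add: p_def group_hom.hom_mult[OF ahom] group_hom.hom_inv[OF ahom])
        finally have "\<gamma> x z' = p \<otimes> z' \<otimes> inv p" .
        then show ?thesis using gC[OF x] sx True yG pG by (simp add: conj_aut_def)
      qed
    qed
    then have "inv y = inv p" using inj invC yC pC by blast
    then have yp: "y = p" using yG pG by (metis inv_inv)
    have "p = (\<gamma> a x2) [^] m" unfolding p_def spow[OF x2(1)]
      using group_hom.hom_nat_pow[OF ahom x2G] by simp
    then have yb: "y = b [^] m" using yp x2(2) by simp
    have f1: "(a \<otimes> w \<otimes> inv a) [^] m = a \<otimes> w [^] m \<otimes> inv a"
    proof -
      have h: "group_hom G G (conj_aut G (inv a))" using conj_aut_auto[OF inv_closed[OF aG]] by (rule auto_group_hom)
      have "a \<otimes> w [^] m \<otimes> inv a = conj_aut G (inv a) (w [^] m)" using aG wG by (simp add: conj_aut_def)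
      also have "\<dots> = (conj_aut G (inv a) w) [^] m" using group_hom.hom_nat_pow[OF h wG] by simp
      also have "\<dots> = (a \<otimes> w \<otimes> inv a) [^] m" using aG wG by (simp add: conj_aut_def)
      finally show ?thesis by simp
    qed
    have f2: "w [^] m = inv (y [^] m) \<otimes> y"
      using pow_mult_distrib[OF Ccomm[OF invC[OF yC] x] inv_closed[OF yG] xG, of m] w_def
        nat_pow_inv[OF yG] y_def by simp
    have f3: "b [^] m = y [^] m \<otimes> (a \<otimes> w \<otimes> inv a) [^] m"
    proof -
      have awG: "a \<otimes> w \<otimes> inv a \<in> carrier G" using awC CG by blast
      show ?thesis unfolding b_def by (rule pow_mult_distrib[OF Ccomm[OF yC awC] yG awG])
    qed
    have yeq: "y = y [^] m \<otimes> (a \<otimes> (inv (y [^] m) \<otimes> y) \<otimes> inv a)"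
      using yb f3 f1 f2 by (simp only:)
    define v where "v = inv (y [^] m) \<otimes> y"
    have ymC: "y [^] m \<in> C" using spow[OF yC] sC[OF yC] by simp
    have vC: "v \<in> C" unfolding v_def by (rule mC[OF invC[OF ymC] yC])
    have vG: "v \<in> carrier G" using vC CG by blast
    have ymG: "y [^] m \<in> carrier G" using yG by simp
    have "y [^] m \<otimes> v = y" unfolding v_def using ymG yG by (rule lc1)
    also have "\<dots> = y [^] m \<otimes> (a \<otimes> v \<otimes> inv a)" unfolding v_def by (rule yeq)
    finally have "y [^] m \<otimes> v = y [^] m \<otimes> (a \<otimes> v \<otimes> inv a)" .
    then have eqv: "v = a \<otimes> v \<otimes> inv a" using ymG vG aG by simp
    have h: "inv a \<otimes> (a \<otimes> v \<otimes> inv a) \<otimes> a = v" using vG aG by (simp add: m_assoc)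
    have "inv a \<otimes> v \<otimes> a = v" by (subst (1) eqv) (rule h)
    then have "v = \<one>" using fix1 vC by blast
    then have "y [^] m = y" using v_def ymG yG by (metis inv_equality inv_inv r_inv inv_closed)
    then show "(x [^] m) [^] m = x [^] m" using y_def by simp
  qed
  have "c [^] (m * m) = c [^] m" using key[OF cC] unfolding nat_pow_pow[OF assms(4)] .
  then have "c [^] (int (m * m)) = c [^] (int m)" by (simp only: int_pow_int)
  then have "int (ord c) dvd int m - int (m * m)" using int_pow_eq[OF assms(4)] by blast
  moreover have "int m - int (m * m) = - (int m * (int m - 1))" by (simp add: algebra_simps)
  moreover have "int (ord c) = int r ^ k" using Nk by simp
  ultimately have "int r ^ k dvd - (int m * (int m - 1))" by simp
  then have "int r ^ k dvd int m * (int m - 1)" by (simp only: dvd_minus_iff)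
  then have cases: "int r ^ k dvd int m \<or> int r ^ k dvd int m - 1"
    by (rule primepow_dvd_consec[OF assms(6)])
  then show ?thesis
  proof
    assume "int r ^ k dvd int m"
    then have om: "ord c dvd m" using Nk by (metis of_nat_dvd_iff of_nat_power)
    have "\<forall>x \<in> C. \<gamma> x = id_aut G"
    proof
      fix x assume x: "x \<in> C"
      then obtain n :: nat where n: "x = c [^] n" using Cpow by blast
      have "ord c dvd n * m" using om by simp
      then have "c [^] (n * m) = \<one>" using pow_eq_id[OF assms(4)] by blast
      then have "\<sigma> x = \<one>" using spow[OF x] n nat_pow_pow[OF assms(4)] by simp
      then show "\<gamma> x = id_aut G" using gC[OF x] by (simp add: conj_aut_one)
    qed
    then show ?thesis by (rule disjI1)
  next
    assume "int r ^ k dvd int m - 1"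
    then have "int (ord c) dvd int m - int 1" using Nk by simp
    then have "c [^] (int 1) = c [^] (int m)" using int_pow_eq[OF assms(4)] by blast
    then have "c [^] (1::nat) = c [^] m" by (simp only: int_pow_int)
    then have cm1: "c [^] m = c" using assms(4) by simp
    have sid: "\<And>x. x \<in> C \<Longrightarrow> \<sigma> x = x"
    proof -
      fix x assume x: "x \<in> C"
      then obtain n :: nat where n: "x = c [^] n" using Cpow by blast
      have "\<sigma> x = c [^] (n * m)" using spow[OF x] n nat_pow_pow[OF assms(4)] by simp
      also have "\<dots> = (c [^] m) [^] n" using nat_pow_pow[OF assms(4)] by (simp add: mult.commute)
      finally show "\<sigma> x = x" using cm1 n by simp
    qed
    have g1: "\<forall>x \<in> C. \<gamma> x = conj_aut G (inv x)" using gC sid by simp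
    have "\<forall>x \<in> C. gamma_tilde G \<gamma> x = id_aut G"
    proof
      fix x assume x: "x \<in> C"
      have xG: "x \<in> carrier G" using x CG by blast
      have "gamma_tilde G \<gamma> x = compose (carrier G) (conj_aut G (inv x)) (conj_aut G (inv (inv x)))"
        using g1 invC[OF x] by (simp add: gamma_tilde_def aut_mult_def)
      also have "\<dots> = conj_aut G (inv (inv x) \<otimes> inv x)" using xG by (simp add: conj_aut_compose)
      also have "\<dots> = id_aut G" using xG by (simp add: conj_aut_one)
      finally show "gamma_tilde G \<gamma> x = id_aut G" .
    qed
    then show ?thesis using g1 by (intro disjI2 conjI)
  qed
qed

end
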